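(* Let $(X,S)$ be an $S$-metric space, $r\ge0$, and let $\{x_n\}$ be an $r$-statistically convergent sequence in $X$. Then $\operatorname{diam}(st\text{-}LIM^r x_n)\le 3r$.
   Context: An $S$-metric on a nonempty set $X$ is a function $S:X^3\to[0,\infty)$ such that for all $x,y,z,a\in X$: $S(x,y,z)=0$ if and only if $x=y=z$, and $S(x,y,z)\le S(x,x,a)+S(y,y,a)+S(z,z,a)$. For $B\subset\mathbb N$ the natural density is $\delta(B)=\lim_{n\to\infty}\frac{|\{k\in B:k\le n\}|}{n}$ when the limit exists. For $r\ge0$, $\{x_n\}$ is $r$-statistically convergent to $x$ if for every $\varepsilon>0$, $\delta(\{n\in\mathbb N: S(x_n,x_n,x)\ge r+\varepsilon\})=0$; $st\text{-}LIM^r x_n$ denotes the set of all $x\in X$ to which $\{x_n\}$ is $r$-statistically convergent, and $\{x_n\}$ is called $r$-statistically convergent if this set is nonempty. For $A\subset X$, $\operatorname{diam}(A)=\sup\{S(x,x,y): x,y\in A\}$. *)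

theory Defs
  imports "HOL-Analysis.Analysis" "HOL-Library.Extended_Real"
begin

definition S_metric :: "'a set \<Rightarrow> ('a \<Rightarrow> 'a \<Rightarrow> 'a \<Rightarrow> real) \<Rightarrow> bool" where
  "S_metric X S \<longleftrightarrow> X \<noteq> {} \<and>
     (\<forall>x\<in>X. \<forall>y\<in>X. \<forall>z\<in>X. S x y z \<ge> 0) \<and>
     (\<forall>x\<in>X. \<forall>y\<in>X. \<forall>z\<in>X. S x y z = 0 \<longleftrightarrow> x = y \<and> y = z) \<and>
     (\<forall>x\<in>X. \<forall>y\<in>X. \<forall>z\<in>X. \<forall>a\<in>X. S x y z \<le> S x x a + S y y a + S z z a)"

definition has_density :: "nat set \<Rightarrow> real \<Rightarrow> bool" where
  "has_density B d \<longleftrightarrow>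
     ((\<lambda>n. real (card {k\<in>B. 1 \<le> k \<and> k \<le> n}) / real n) \<longlonglongrightarrow> d)"

definition r_stat_conv_to ::
  "('a \<Rightarrow> 'a \<Rightarrow> 'a \<Rightarrow> real) \<Rightarrow> real \<Rightarrow> (nat \<Rightarrow> 'a) \<Rightarrow> 'a \<Rightarrow> bool" where
  "r_stat_conv_to S r x y \<longleftrightarrow>
     (\<forall>\<epsilon>>0. has_density {n. n \<ge> 1 \<and> S (x n) (x n) y \<ge> r + \<epsilon>} 0)"

definition st_LIM :: "'a set \<Rightarrow> ('a \<Rightarrow> 'a \<Rightarrow> 'a \<Rightarrow> real) \<Rightarrow> real \<Rightarrow> (nat \<Rightarrow> 'a) \<Rightarrow> 'a set" where
  "st_LIM X S r x = {y\<in>X. r_stat_conv_to S r x y}"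

text \<open>Diameter, as an extended real (so that unbounded sets have diameter \<infinity>).\<close>
definition S_diam :: "('a \<Rightarrow> 'a \<Rightarrow> 'a \<Rightarrow> real) \<Rightarrow> 'a set \<Rightarrow> ereal" where
  "S_diam S A = (SUP p\<in>A \<times> A. ereal (S (fst p) (fst p) (snd p)))"

end

theory Submission
  imports Defs
begin

lemma density_union_nonempty:
  assumes A: "has_density A 0" and B: "has_density B 0"
  shows "\<exists>n\<ge>1. n \<notin> A \<and> n \<notin> B"
proof (rule ccontr)
  assume H: "\<not> (\<exists>n\<ge>1. n \<notin> A \<and> n \<notin> B)"
  let ?fA = "\<lambda>n. real (card {k\<in>A. 1 \<le> k \<and> k \<le> n}) / real n"
  let ?fB = "\<lambda>n. real (card {k\<in>B. 1 \<le> k \<and> k \<le> n}) / real n"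
  have "(\<lambda>n. ?fA n + ?fB n) \<longlonglongrightarrow> 0 + 0"
    using A B unfolding has_density_def by (intro tendsto_add)
  then have "eventually (\<lambda>n. ?fA n + ?fB n < 1) sequentially"
    by (intro order_tendstoD) auto
  then obtain N where N: "\<And>n. n \<ge> N \<Longrightarrow> ?fA n + ?fB n < 1"
    by (auto simp: eventually_sequentially)
  define n where "n = max N 1"
  have n1: "n \<ge> 1" and nN: "n \<ge> N" by (auto simp: n_def)
  have "{1..n} \<subseteq> {k\<in>A. 1 \<le> k \<and> k \<le> n} \<union> {k\<in>B. 1 \<le> k \<and> k \<le> n}"
    using H by auto
  then have "card {1..n} \<le> card ({k\<in>A. 1 \<le> k \<and> k \<le> n} \<union> {k\<in>B. 1 \<le> k \<and> k \<le> n})"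
    by (intro card_mono) auto
  also have "\<dots> \<le> card {k\<in>A. 1 \<le> k \<and> k \<le> n} + card {k\<in>B. 1 \<le> k \<and> k \<le> n}"
    by (rule card_Un_le)
  finally have "real n \<le> real (card {k\<in>A. 1 \<le> k \<and> k \<le> n}) + real (card {k\<in>B. 1 \<le> k \<and> k \<le> n})"
    by simp
  then have "1 \<le> ?fA n + ?fB n" using n1
    by (simp add: add_divide_distrib[symmetric] divide_simps)
  with N[OF nN] show False by simp
qed

theorem theorem4p2:
  fixes X :: "'a set" and S :: "'a \<Rightarrow> 'a \<Rightarrow> 'a \<Rightarrow> real"
    and r :: real and x :: "nat \<Rightarrow> 'a"
  assumes "S_metric X S"
    and "r \<ge> 0"
    and "\<And>n. x n \<in> X"
    and "st_LIM X S r x \<noteq> {}"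
  shows "S_diam S (st_LIM X S r x) \<le> ereal (3 * r)"
proof -
  have nonneg: "\<And>a b c. a\<in>X \<Longrightarrow> b\<in>X \<Longrightarrow> c\<in>X \<Longrightarrow> S a b c \<ge> 0"
    and zero: "\<And>a. a\<in>X \<Longrightarrow> S a a a = 0"
    and tri: "\<And>a b c d. a\<in>X \<Longrightarrow> b\<in>X \<Longrightarrow> c\<in>X \<Longrightarrow> d\<in>X \<Longrightarrow> S a b c \<le> S a a d + S b b d + S c c d"
    using assms(1) unfolding S_metric_def by auto
  have sym: "S a a b = S b b a" if "a\<in>X" "b\<in>X" for a b
  proof -
    have "S a a b \<le> S b b a" using tri[of a a b a] that zero by auto
    moreover have "S b b a \<le> S a a b" using tri[of b b a b] that zero by auto
    ultimately show ?thesis by simp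
  qed
  have key: "S y y z \<le> 3 * r" if y: "y \<in> st_LIM X S r x" and z: "z \<in> st_LIM X S r x" for y z
  proof (rule field_le_epsilon)
    fix e :: real assume e: "e > 0"
    have yX: "y \<in> X" and zX: "z \<in> X" using y z by (auto simp: st_LIM_def)
    have "has_density {n. n \<ge> 1 \<and> S (x n) (x n) y \<ge> r + e/3} 0"
         "has_density {n. n \<ge> 1 \<and> S (x n) (x n) z \<ge> r + e/3} 0"
      using y z e by (auto simp: st_LIM_def r_stat_conv_to_def)
    from density_union_nonempty[OF this] obtain n where
      n: "S (x n) (x n) y < r + e/3" "S (x n) (x n) z < r + e/3"
      by (auto simp: not_le)
    have "S y y z \<le> S y y (x n) + S y y (x n) + S z z (x n)"
      using tri[of y y z "x n"] yX zX assms(3) by auto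
    also have "\<dots> = 2 * S (x n) (x n) y + S (x n) (x n) z"
      using sym yX zX assms(3) by simp
    also have "\<dots> \<le> 3 * r + e" using n by simp
    finally show "S y y z \<le> 3 * r + e" .
  qed
  show ?thesis unfolding S_diam_def
    by (rule SUP_least) (auto intro: key)
qed

end
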